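(* For $k\in\mathbb{N}$ let $H_k$ be the restriction to $S^2=\{x\in\mathbb{R}^3:|x|=1\}$ of the harmonic polynomial $k^{1/4}(x_1+ix_2)^k$ (an eigenfunction of $-\Delta_{S^2}$ with eigenvalue $k(k+1)$ and $\|H_k\|_{L^2(S^2)}\approx1$). For each $\alpha\in(1,2)$ there exist an $\alpha$-dimensional probability measure $\mu$ on $S^2$ and an increasing sequence of natural numbers $\{k_n\}$ such that for every $p\ge2$, $$\|H_{k_n}\|_{L^p(S^2;d\mu)}\approx k_n^{\frac14-\frac{\alpha-1}{2p}},$$ with implicit constants depending on $\alpha$ and $p$ but not on $n$.
   Context: A Borel probability measure $\mu$ on $S^2$ (round metric) is $\alpha$-dimensional if there is $C>0$ with $\mu(B(x,r))\le Cr^\alpha$ for all $x\in S^2$ and all $0<r<\mathrm{inj}\,S^2$, $B(x,r)$ the geodesic ball. $A\approx B$ means $C^{-1}B\le A\le CB$. *)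

theory Defs
  imports "HOL-Analysis.Analysis" "HOL-Probability.Probability"
begin

definition S2 :: "(real^3) set" where
  "S2 = sphere 0 1"

definition gdist :: "real^3 \<Rightarrow> real^3 \<Rightarrow> real" where
  "gdist x y = arccos (max (-1) (min 1 (x \<bullet> y)))"

definition gball :: "real^3 \<Rightarrow> real \<Rightarrow> (real^3) set" where
  "gball x r = {y \<in> S2. gdist x y < r}"

text \<open>Borel probability measure on S^2 (injectivity radius of S^2 is pi).\<close>
definition borel_prob_on_S2 :: "(real^3) measure \<Rightarrow> bool" where
  "borel_prob_on_S2 \<mu> \<longleftrightarrow> prob_space \<mu> \<and> sets \<mu> = sets (restrict_space borel S2)"

definition alpha_dimensional :: "(real^3) measure \<Rightarrow> real \<Rightarrow> bool" where
  "alpha_dimensional \<mu> \<alpha> \<longleftrightarrow> borel_prob_on_S2 \<mu> \<and>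
     (\<exists>C>0. \<forall>x\<in>S2. \<forall>r. 0 < r \<and> r < pi \<longrightarrow> measure \<mu> (gball x r) \<le> C * r powr \<alpha>)"

definition H :: "nat \<Rightarrow> real^3 \<Rightarrow> complex" where
  "H k x = complex_of_real (real k powr (1/4)) * (Complex (x$1) (x$2)) ^ k"

definition Lp_norm :: "(real^3) measure \<Rightarrow> real \<Rightarrow> (real^3 \<Rightarrow> complex) \<Rightarrow> real" where
  "Lp_norm \<mu> p f = (\<integral>x. norm (f x) powr p \<partial>\<mu>) powr (1/p)"

end

theory Submission
  imports Defs
begin

definition U :: "real measure" where "U = restrict_space lborel {0..1}"

lemma prob_U: "prob_space U"
  unfolding U_def
  by (rule prob_spaceI) (simp add: space_restrict_space emeasure_restrict_space)

lemma space_U: "space U = {0..1}"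
  unfolding U_def by (simp add: space_restrict_space)

definition F :: "real \<Rightarrow> real \<times> real \<Rightarrow> real^3" where
  "F g z = vector [sqrt (1 - (snd z / 2)^2 - (fst z powr g / 2)^2), snd z / 2, fst z powr g / 2]"

lemma sq_le: "0 \<le> (t::real) \<Longrightarrow> t \<le> 1 \<Longrightarrow> (t/2)^2 \<le> 1/4"
proof -
  assume "0 \<le> t" "t \<le> 1"
  then have "t*t \<le> 1" by (simp add: mult_le_one)
  then show ?thesis by (simp add: power2_eq_square)
qed

lemma F_S2:
  assumes "0 < g" "z \<in> {0..1} \<times> {0..1}"
  shows "F g z \<in> S2"
proof -
  obtain v u where z: "z = (v,u)" "0 \<le> v" "v \<le> 1" "0 \<le> u" "u \<le> 1" using assms(2) by auto
  have "v powr g \<le> 1" using z assms by (intro powr_le1) auto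
  then have a: "(v powr g / 2)^2 \<le> 1/4" by (intro sq_le) auto
  have b: "(u/2)^2 \<le> 1/4" using z by (intro sq_le) auto
  have "(sqrt (1 - (u / 2)^2 - (v powr g / 2)^2))^2 = 1 - (u / 2)^2 - (v powr g / 2)^2"
    using a b by simp
  then have "norm (F g z) = 1"
    unfolding F_def z norm_vec_def L2_set_def by (simp add: sum_3)
  then show ?thesis by (simp add: S2_def)
qed

lemma F_lin: "F g z = sqrt (1 - (snd z / 2)^2 - (fst z powr g / 2)^2) *\<^sub>R (vector [1,0,0]::real^3)
   + (snd z / 2) *\<^sub>R vector [0,1,0] + (fst z powr g / 2) *\<^sub>R vector [0,0,1]"
  unfolding F_def by (simp add: vec_eq_iff forall_3)

lemma F_meas: "F g \<in> borel_measurable (U \<Otimes>\<^sub>M U)"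
proof -
  have [measurable]: "(\<lambda>x. x) \<in> borel_measurable U" unfolding U_def
    by (rule measurable_restrict_space1) simp
  show ?thesis unfolding F_lin by measurable
qed

lemma F_meas2: "0 < g \<Longrightarrow> F g \<in> measurable (U \<Otimes>\<^sub>M U) (restrict_space borel S2)"
  by (rule measurable_restrict_space2) (auto simp: space_pair_measure space_U F_S2 F_meas)

definition mu :: "real \<Rightarrow> (real^3) measure" where
  "mu g = distr (U \<Otimes>\<^sub>M U) (restrict_space borel S2) (F g)"

lemma prob_UU: "prob_space (U \<Otimes>\<^sub>M U)"
  by (intro prob_space_pair prob_U)

lemma mu_borel: "0 < g \<Longrightarrow> borel_prob_on_S2 (mu g)"
  unfolding borel_prob_on_S2_def mu_def
  by (auto intro!: prob_space.prob_space_distr prob_UU F_meas2)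

lemma dist_le_gdist:
  assumes "x \<in> S2" "y \<in> S2"
  shows "dist x y \<le> gdist x y"
proof -
  have nx: "norm x = 1" and ny: "norm y = 1" using assms by (auto simp: S2_def)
  define c where "c = x \<bullet> y"
  have "\<bar>c\<bar> \<le> 1" unfolding c_def using Cauchy_Schwarz_ineq2[of x y] nx ny by simp
  then have g: "gdist x y = arccos c" unfolding gdist_def c_def by simp
  define t where "t = arccos c"
  have t0: "0 \<le> t" unfolding t_def using \<open>\<bar>c\<bar> \<le> 1\<close> by (intro arccos_lbound) auto
  have ct: "cos t = c" unfolding t_def using \<open>\<bar>c\<bar> \<le> 1\<close> by (intro cos_arccos) auto
  have "(dist x y)^2 = 2 - 2 * c"
  proof -
    have "(dist x y)^2 = (x - y) \<bullet> (x - y)" by (simp add: dist_norm power2_norm_eq_inner)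
    also have "\<dots> = x \<bullet> x - 2 * (x \<bullet> y) + y \<bullet> y" by (simp add: inner_diff inner_commute)
    also have "\<dots> = 2 - 2 * c" using nx ny by (simp add: c_def flip: power2_norm_eq_inner)
    finally show ?thesis .
  qed
  also have "\<dots> = 4 * (sin (t/2))^2"
    using cos_double_sin[of "t/2"] ct by simp
  also have "\<dots> \<le> 4 * (t/2)^2"
  proof -
    have "\<bar>sin (t/2)\<bar> \<le> \<bar>t/2\<bar>" by (rule abs_sin_x_le_abs_x)
    then have "(sin (t/2))^2 \<le> (t/2)^2" by (metis abs_le_square_iff)
    then show ?thesis by simp
  qed
  also have "\<dots> = t^2" by (simp add: power2_eq_square)
  finally have "dist x y \<le> t" using t0 by (meson power2_le_imp_le)
  then show ?thesis using g t_def by simp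
qed

lemma powr_subadd_aux:
  fixes a s e :: real
  assumes "0 \<le> a" "a \<le> s" "0 < s" "e \<le> 1"
  shows "a * s powr (e-1) \<le> a powr e"
proof (cases "a = 0")
  case False
  then have "s powr (e-1) \<le> a powr (e-1)" using assms
    by (intro powr_mono2') auto
  then have "a * s powr (e-1) \<le> a * a powr (e-1)" using assms by (simp add: mult_left_mono)
  also have "a * a powr (e-1) = a powr 1 * a powr (e-1)" using False assms by simp
  also have "\<dots> = a powr (1 + (e-1))" by (rule powr_add[symmetric])
  also have "\<dots> = a powr e" by simp
  finally show ?thesis .
qed (use assms in simp)

lemma powr_subadd:
  fixes a b e :: real
  assumes "0 \<le> a" "0 \<le> b" "0 < e" "e \<le> 1"
  shows "(a+b) powr e \<le> a powr e + b powr e"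
proof (cases "a + b = 0")
  case True then show ?thesis using assms by simp
next
  case False
  define s where "s = a + b"
  have s: "0 < s" using False assms unfolding s_def by simp
  have "s powr e = s powr (1 + (e - 1))" by simp
  also have "\<dots> = s powr 1 * s powr (e-1)" by (rule powr_add)
  also have "\<dots> = s * s powr (e-1)" using s by simp
  also have "\<dots> = a * s powr (e-1) + b * s powr (e-1)"
    by (simp add: s_def distrib_right)
  finally have 1: "s powr e = a * s powr (e-1) + b * s powr (e-1)" .
  have 2: "a * s powr (e-1) \<le> a powr e" using assms s s_def by (intro powr_subadd_aux) auto
  have 3: "b * s powr (e-1) \<le> b powr e" using assms s s_def by (intro powr_subadd_aux) auto
  show ?thesis using 1 2 3 unfolding s_def by linarith
qed

lemma int_sets_U: "{0..1} \<inter> {a..b} \<in> sets U"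
  unfolding U_def sets_restrict_space by auto

lemma int_meas_U: "a \<le> b \<Longrightarrow> measure U ({0..1} \<inter> {a..b}) \<le> b - a"
proof -
  assume "a \<le> b"
  have "measure U ({0..1} \<inter> {a..b}) = measure lborel ({0..1} \<inter> {a..b})"
    unfolding U_def by (subst measure_restrict_space) auto
  also have "\<dots> \<le> measure lborel {a..b}"
    using \<open>a \<le> b\<close> by (intro measure_mono_fmeasurable) (simp_all add: fmeasurable_def)
  also have "\<dots> = b - a" using \<open>a \<le> b\<close> by simp
  finally show ?thesis .
qed

lemma measure_UU_times:
  assumes "A \<in> sets U" "B \<in> sets U"
  shows "measure (U \<Otimes>\<^sub>M U) (A \<times> B) = measure U A * measure U B"
proof -
  interpret U: prob_space U by (rule prob_U)
  show ?thesis unfolding measure_def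
    using U.emeasure_pair_measure_Times[OF assms]
    by (simp add: enn2real_mult)
qed

lemma v_interval:
  fixes \<alpha> v b r :: real
  assumes a: "1 < \<alpha>" and a2: "\<alpha> < 2" and v: "0 \<le> v" and r: "0 < r"
    and h: "\<bar>b - v powr (1/(\<alpha>-1)) / 2\<bar> < r"
  defines "lo \<equiv> (max 0 (2*b - 2*r)) powr (\<alpha>-1)"
  shows "v \<in> {lo .. lo + (4*r) powr (\<alpha>-1)}"
proof -
  define t where "t = v powr (1/(\<alpha>-1))"
  have t0: "0 \<le> t" unfolding t_def by simp
  have vt: "v = t powr (\<alpha>-1)"
  proof (cases "v = 0")
    case True then show ?thesis unfolding t_def by simp
  next
    case False
    have "t powr (\<alpha>-1) = v powr (1/(\<alpha>-1) * (\<alpha>-1))" unfolding t_def by (rule powr_powr)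
    also have "\<dots> = v" using a v False by simp
    finally show ?thesis by simp
  qed
  define s where "s = max 0 (2*b - 2*r)"
  have s0: "0 \<le> s" unfolding s_def by simp
  have st: "s \<le> t" using h t0 unfolding s_def t_def by auto
  have ts: "t \<le> s + 4*r" using h unfolding s_def t_def by auto
  have "lo \<le> v" unfolding lo_def vt s_def[symmetric] using st s0 a by (intro powr_mono2) auto
  moreover have "v \<le> (s + 4*r) powr (\<alpha>-1)" unfolding vt using ts t0 a by (intro powr_mono2) auto
  moreover have "(s + 4*r) powr (\<alpha>-1) \<le> s powr (\<alpha>-1) + (4*r) powr (\<alpha>-1)"
    using s0 r a a2 by (intro powr_subadd) auto
  ultimately show ?thesis unfolding lo_def s_def[symmetric] by auto
qed

lemma ball_bound:
  fixes \<alpha> r :: real and x :: "real^3"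
  assumes a: "1 < \<alpha>" "\<alpha> < 2" and x: "x \<in> S2" and r: "0 < r"
  shows "measure (mu (1/(\<alpha>-1))) (gball x r) \<le> 4 powr \<alpha> * r powr \<alpha>"
proof (cases "gball x r \<in> sets (mu (1/(\<alpha>-1)))")
  case False then show ?thesis by (simp add: measure_notin_sets)
next
  case True
  define g where "g = 1/(\<alpha>-1)"
  have g0: "0 < g" using a unfolding g_def by simp
  have Ts: "gball x r \<in> sets (restrict_space borel S2)" using True unfolding mu_def g_def by simp
  define lo where "lo = (max 0 (2*(x$3) - 2*r)) powr (\<alpha>-1)"
  define A where "A = {0..1} \<inter> {lo .. lo + (4*r) powr (\<alpha>-1)}"
  define B where "B = {0..1::real} \<inter> {2*(x$2) - 2*r .. 2*(x$2) + 2*r}"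
  have AU: "A \<in> sets U" "B \<in> sets U" unfolding A_def B_def by (rule int_sets_U)+
  have sub: "F g -` gball x r \<inter> space (U \<Otimes>\<^sub>M U) \<subseteq> A \<times> B"
  proof
    fix z assume z: "z \<in> F g -` gball x r \<inter> space (U \<Otimes>\<^sub>M U)"
    obtain v u where zz: "z = (v,u)" "0 \<le> v" "v \<le> 1" "0 \<le> u" "u \<le> 1"
      using z by (auto simp: space_pair_measure space_U)
    have FS: "F g z \<in> S2" using zz g0 by (intro F_S2) auto
    have "gdist x (F g z) < r" using z by (simp add: gball_def)
    then have d: "norm (x - F g z) < r" using dist_le_gdist[OF x FS] by (simp add: dist_norm)
    have c2: "\<bar>x$2 - u/2\<bar> < r"
      using component_le_norm_cart[of "x - F g z" 2] d unfolding zz F_def by simp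
    have c3: "\<bar>x$3 - v powr g/2\<bar> < r"
      using component_le_norm_cart[of "x - F g z" 3] d unfolding zz F_def by simp
    have "v \<in> {lo .. lo + (4*r) powr (\<alpha>-1)}"
      unfolding lo_def using v_interval[OF a(1) a(2) zz(2) r, of "x$3"] c3 g_def by simp
    moreover have "u \<in> {2*(x$2) - 2*r .. 2*(x$2) + 2*r}" using c2 by auto
    ultimately show "z \<in> A \<times> B" using zz unfolding A_def B_def by auto
  qed
  interpret P: prob_space "U \<Otimes>\<^sub>M U" by (rule prob_UU)
  have "measure (mu g) (gball x r) = measure (U \<Otimes>\<^sub>M U) (F g -` gball x r \<inter> space (U \<Otimes>\<^sub>M U))"
    unfolding mu_def using Ts F_meas2[OF g0] by (simp add: measure_distr)
  also have "\<dots> \<le> measure (U \<Otimes>\<^sub>M U) (A \<times> B)"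
    using sub AU by (intro P.finite_measure_mono) auto
  also have "\<dots> = measure U A * measure U B" using AU by (rule measure_UU_times)
  also have "\<dots> \<le> (4*r) powr (\<alpha>-1) * (4*r)"
  proof (rule mult_mono)
    show "measure U A \<le> (4*r) powr (\<alpha>-1)" unfolding A_def using int_meas_U[of lo "lo + (4*r) powr (\<alpha>-1)"] by simp
    show "measure U B \<le> 4*r" unfolding B_def using int_meas_U[of "2*(x$2) - 2*r" "2*(x$2) + 2*r"] r by simp
  qed auto
  also have "\<dots> = (4*r) powr \<alpha>"
  proof -
    have "(4*r) powr (\<alpha>-1) * (4*r) = (4*r) powr (\<alpha>-1) * (4*r) powr 1" using r by simp
    also have "\<dots> = (4*r) powr (\<alpha>-1+1)" by (rule powr_add[symmetric])
    finally show ?thesis by simp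
  qed
  also have "\<dots> = 4 powr \<alpha> * r powr \<alpha>" using r by (simp add: powr_mult)
  finally show ?thesis unfolding g_def .
qed

lemma normH:
  assumes y: "y \<in> S2" and k: "1 \<le> k" and p: "0 < p"
  shows "norm (H k y) powr p = real k powr (p/4) * (1 - (y$3)^2) powr (real k * p / 2)"
proof -
  have "norm y = 1" using y by (simp add: S2_def)
  then have "sqrt ((y$1)^2 + (y$2)^2 + (y$3)^2) = 1"
    unfolding norm_vec_def L2_set_def by (simp add: sum_3 add.assoc)
  then have sq: "(y$1)^2 + (y$2)^2 = 1 - (y$3)^2" by simp
  define w where "w = 1 - (y$3)^2"
  have w0: "0 \<le> w" unfolding w_def using sq[symmetric] by simp
  have "norm (H k y) = real k powr (1/4) * sqrt w ^ k"
    unfolding H_def w_def sq[symmetric] by (simp add: norm_mult norm_power complex_norm)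
  also have "sqrt w ^ k = w powr (real k / 2)"
  proof (cases "w = 0")
    case True then show ?thesis using k by simp
  next
    case False
    then have "sqrt w ^ k = (w powr (1/2)) powr real k" using w0
      by (simp add: sqrt_def powr_realpow root_powr_inverse)
    also have "\<dots> = w powr (real k / 2)" by (simp add: powr_powr)
    finally show ?thesis .
  qed
  finally have "norm (H k y) powr p = (real k powr (1/4) * w powr (real k / 2)) powr p" by simp
  also have "\<dots> = (real k powr (1/4)) powr p * (w powr (real k / 2)) powr p"
    using w0 by (simp add: powr_mult)
  also have "\<dots> = real k powr (p/4) * w powr (real k * p / 2)"
    by (simp add: powr_powr)
  finally show ?thesis unfolding w_def .
qed

definition G :: "real \<Rightarrow> real \<Rightarrow> real \<Rightarrow> real" where
  "G g m v = (1 - (v powr g / 2)^2) powr m"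

lemma H_meas: "(\<lambda>y. norm (H k y) powr p) \<in> borel_measurable (restrict_space borel S2)"
proof (rule measurable_restrict_space1)
  show "(\<lambda>y. norm (H k y) powr p) \<in> borel_measurable borel"
    unfolding H_def Complex_eq by measurable
qed

lemma G_meas: "G g m \<in> borel_measurable U"
proof -
  have [measurable]: "(\<lambda>x. x) \<in> borel_measurable U" unfolding U_def
    by (rule measurable_restrict_space1) simp
  show ?thesis unfolding G_def by measurable
qed

lemma int_eq:
  assumes g: "0 < g" and k: "1 \<le> k" and p: "0 < p"
  shows "integral\<^sup>L (mu g) (\<lambda>y. norm (H k y) powr p) = real k powr (p/4) * integral\<^sup>L U (G g (real k * p / 2))"
proof -
  interpret U: prob_space U by (rule prob_U)
  have "integral\<^sup>L (mu g) (\<lambda>y. norm (H k y) powr p) = integral\<^sup>L (U \<Otimes>\<^sub>M U) (\<lambda>z. norm (H k (F g z)) powr p)"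
    unfolding mu_def by (rule integral_distr[OF F_meas2[OF g] H_meas])
  also have "\<dots> = integral\<^sup>L (U \<Otimes>\<^sub>M U) (\<lambda>z. real k powr (p/4) * G g (real k * p / 2) (fst z))"
  proof (rule Bochner_Integration.integral_cong[OF refl])
    fix z assume z: "z \<in> space (U \<Otimes>\<^sub>M U)"
    then have "z \<in> {0..1} \<times> {0..1}" by (simp add: space_pair_measure space_U)
    then have "F g z \<in> S2" using g by (intro F_S2)
    then show "norm (H k (F g z)) powr p = real k powr (p/4) * G g (real k * p / 2) (fst z)"
      using normH[of "F g z" k p] k p by (simp add: G_def F_def)
  qed
  also have "\<dots> = real k powr (p/4) * integral\<^sup>L (U \<Otimes>\<^sub>M U) (\<lambda>z. G g (real k * p / 2) (fst z))"
    by simp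
  also have "integral\<^sup>L (U \<Otimes>\<^sub>M U) (\<lambda>z. G g (real k * p / 2) (fst z)) = integral\<^sup>L (distr (U \<Otimes>\<^sub>M U) U fst) (G g (real k * p / 2))"
    by (rule integral_distr[symmetric]) (auto intro: G_meas)
  also have "distr (U \<Otimes>\<^sub>M U) U fst = U" by (rule U.distr_pair_fst)
  finally show ?thesis .
qed

lemma q_eq: "0 \<le> (v::real) \<Longrightarrow> (v powr g / 2)^2 = v powr (2*g) / 4"
proof -
  assume "0 \<le> v"
  have "(v powr g)^2 = v powr g * v powr g" by (simp add: power2_eq_square)
  also have "\<dots> = v powr (g + g)" by (rule powr_add[symmetric])
  also have "g + g = 2 * g" by simp
  finally show ?thesis by (simp add: power_divide)
qed

lemma q_le: "0 \<le> v \<Longrightarrow> v \<le> 1 \<Longrightarrow> 0 < (g::real) \<Longrightarrow> v powr (2*g) / 4 \<le> 1/4"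
  using powr_le1[of "2*g" v] by simp

lemma G_exp: "0 \<le> v \<Longrightarrow> v \<le> 1 \<Longrightarrow> 0 < g \<Longrightarrow> G g m v = exp (m * ln (1 - v powr (2*g) / 4))"
  using q_le[of v g] powr_def[of "1 - v powr (2*g) / 4" m] by (simp add: G_def q_eq)

lemma G_lower:
  assumes g: "0 < g" and m: "1 \<le> m" and v: "0 \<le> v" "v \<le> m powr (-1/(2*g))"
  shows "exp (-1/2) \<le> G g m v"
proof -
  have a1: "m powr (-1/(2*g)) \<le> 1" using powr_mono[of "-1/(2*g)" 0 m] m g by simp
  have "v powr (2*g) \<le> (m powr (-1/(2*g))) powr (2*g)" using v g by (intro powr_mono2) auto
  also have "\<dots> = m powr (-1)" using g by (simp add: powr_powr)
  also have "\<dots> = 1/m" using m by (simp add: powr_minus divide_inverse)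
  finally have vb: "v powr (2*g) \<le> 1/m" .
  define q where "q = v powr (2*g) / 4"
  have q0: "0 \<le> q" unfolding q_def by simp
  have qm: "m * q \<le> 1/4" unfolding q_def using vb m by (simp add: field_simps)
  have "1 * q \<le> m * q" using m q0 by (intro mult_right_mono) auto
  then have q4: "q \<le> 1/4" using qm by simp
  have "-q - 2*q^2 \<le> ln (1 - q)" using q0 q4 by (intro ln_one_minus_pos_lower_bound) auto
  moreover have "(2*q) * q \<le> 1 * q" using q0 q4 by (intro mult_right_mono) auto
  then have "-2*q \<le> -q - 2*q^2" by (simp add: power2_eq_square)
  ultimately have "-2*q \<le> ln (1-q)" by linarith
  then have "m * (-2*q) \<le> m * ln (1-q)" using m by (intro mult_left_mono) auto
  then have "-1/2 \<le> m * ln (1-q)" using qm by linarith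
  then have "exp (-1/2) \<le> exp (m * ln (1-q))" by simp
  also have "\<dots> = G g m v" using G_exp[of v g m] v a1 g unfolding q_def by simp
  finally show ?thesis .
qed

lemma G_upper1:
  assumes g: "0 < g" and m: "0 \<le> m" and v: "0 \<le> v" "v \<le> 1"
  shows "G g m v \<le> 1"
  unfolding G_def q_eq[OF v(1)] using q_le[OF v g] m by (intro powr_le1) auto

lemma G_upper2:
  assumes g: "0 < g" and m: "0 < m" and v: "0 < v" "v \<le> 1"
  shows "G g m v \<le> 4/m * v powr (-(2*g))"
proof -
  define q where "q = v powr (2*g) / 4"
  have q0: "0 < q" unfolding q_def using v by simp
  have q4: "q \<le> 1/4" unfolding q_def using q_le[of v g] v g by simp
  have "ln (1-q) \<le> (1-q) - 1" using q4 by (intro ln_le_minus_one) auto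
  then have "m * ln (1-q) \<le> m * (-q)" using m by (intro mult_left_mono) auto
  then have "G g m v \<le> exp (-(m*q))" using G_exp[of v g m] v g unfolding q_def by simp
  also have "exp (-(m*q)) = 1 / exp (m*q)" by (simp add: exp_minus divide_inverse)
  also have "\<dots> \<le> 1 / (m*q)"
  proof -
    have "m*q < exp (m*q)" using exp_gt_zero[of "m*q"] exp_ge_add_one_self[of "m*q"] by linarith
    then show ?thesis using m q0 by (intro divide_left_mono) auto
  qed
  also have "\<dots> = 4/m * v powr (-(2*g))" unfolding q_def using v m by (simp add: powr_minus field_simps)
  finally show ?thesis .
qed

lemma J_eq:
  fixes a b :: real
  assumes a: "0 < a" "a \<le> 1" and b: "1 < b"
  shows "integral\<^sup>L U (\<lambda>v. indicator {a..1} v * v powr (-b)) = (a powr (1-b) - 1) / (b - 1)"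
proof -
  have "integral\<^sup>L U (\<lambda>v. indicator {a..1} v * v powr (-b))
      = integral\<^sup>L lborel (\<lambda>v. indicator {0..1} v *\<^sub>R (indicator {a..1} v * v powr (-b)))"
    unfolding U_def by (rule integral_restrict_space) simp
  also have "\<dots> = integral\<^sup>L lborel (\<lambda>v. indicator {a..1} v *\<^sub>R v powr (-b))"
    using a by (intro Bochner_Integration.integral_cong) (auto simp: indicator_def)
  also have "\<dots> = (LBINT v:{a..1}. v powr (-b))" by (simp add: set_lebesgue_integral_def)
  also have "\<dots> = (LBINT v=a..(1::real). v powr (-b))" using interval_integral_Icc[of a 1 "\<lambda>v. v powr (-b)"] a by simp
  also have "\<dots> = 1 powr (1-b) / (1-b) - a powr (1-b) / (1-b)"
  proof (rule interval_integral_FTC_finite)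
    show "continuous_on {min a 1..max a 1} (\<lambda>v. v powr (-b))"
      using a by (intro continuous_intros) auto
    fix x assume x: "min a 1 \<le> x" "x \<le> max a 1"
    then have x0: "0 < x" using a by auto
    have "((\<lambda>z. z powr (1-b)) has_real_derivative (1-b) * x powr (1-b-1)) (at x)"
      using x0 by (rule has_real_derivative_powr)
    then have "((\<lambda>z. z powr (1-b) / (1-b)) has_real_derivative (1-b) * x powr (1-b-1) / (1-b)) (at x)"
      by (rule DERIV_cdivide)
    moreover have "(1-b) * x powr (1-b-1) / (1-b) = x powr (-b)" using b by simp
    ultimately have "((\<lambda>z. z powr (1-b) / (1-b)) has_real_derivative x powr (-b)) (at x)" by simp
    then show "((\<lambda>z. z powr (1-b) / (1-b)) has_vector_derivative x powr (-b)) (at x within {min a 1..max a 1})"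
      by (simp add: has_real_derivative_iff_has_vector_derivative has_vector_derivative_at_within)
  qed
  also have "\<dots> = (a powr (1-b) - 1) / (b - 1)" using b by (simp add: field_simps)
  finally show ?thesis .
qed

lemma id_meas_U [measurable]: "(\<lambda>x. x) \<in> borel_measurable U"
  unfolding U_def by (rule measurable_restrict_space1) simp

lemma meas_U_Icc: "0 \<le> a \<Longrightarrow> a \<le> 1 \<Longrightarrow> measure U {0..a} = a"
  unfolding U_def by (subst measure_restrict_space) auto

lemma G_nonneg: "0 \<le> G g m v" unfolding G_def by simp

lemma G_integrable: "0 < g \<Longrightarrow> 0 \<le> m \<Longrightarrow> integrable U (G g m)"
proof -
  assume g: "0 < g" and m: "0 \<le> m"
  interpret U: prob_space U by (rule prob_U)
  show ?thesis
  proof (rule U.integrable_const_bound[where B=1])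
    show "AE x in U. norm (G g m x) \<le> 1"
      using G_upper1[OF g m] G_nonneg by (intro AE_I2) (auto simp: space_U)
    show "G g m \<in> borel_measurable U" by (rule G_meas)
  qed
qed

lemma I_lower:
  assumes g: "0 < g" and m: "1 \<le> m"
  shows "exp (-1/2) * m powr (-1/(2*g)) \<le> integral\<^sup>L U (G g m)"
proof -
  interpret U: prob_space U by (rule prob_U)
  define a where "a = m powr (-1/(2*g))"
  have a0: "0 < a" unfolding a_def using m by simp
  have a1: "a \<le> 1" unfolding a_def using powr_mono[of "-1/(2*g)" 0 m] m g by simp
  have "exp (-1/2) * a = integral\<^sup>L U (\<lambda>v. exp (-1/2) * (indicator {0..a} v :: real))"
    using a0 a1 by (simp add: space_U meas_U_Icc Int_absorb2)
  also have "\<dots> \<le> integral\<^sup>L U (G g m)"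
  proof (rule integral_mono)
    show "integrable U (\<lambda>v. exp (-1/2) * (indicator {0..a} v :: real))"
    proof -
      have "{0..1} \<inter> {0..a} = {0..a}" using a1 by auto
      then have S: "{0..a} \<in> sets U" using int_sets_U[of 0 a] by metis
      then show ?thesis by (intro integrable_mult_right integrable_real_indicator) (auto simp: less_top[symmetric])
    qed
    show "integrable U (G g m)" using g m by (intro G_integrable) auto
    fix v assume "v \<in> space U"
    then show "exp (-1/2) * (indicator {0..a} v :: real) \<le> G g m v"
      using G_lower[OF g m, of v] G_nonneg[of g m v] by (auto simp: indicator_def a_def space_U)
  qed
  finally show ?thesis unfolding a_def .
qed

lemma I_upper:
  assumes g: "1 < g" and m: "1 \<le> m"
  shows "integral\<^sup>L U (G g m) \<le> (1 + 4/(2*g-1)) * m powr (-1/(2*g))"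
proof -
  interpret U: prob_space U by (rule prob_U)
  define a where "a = m powr (-1/(2*g))"
  define b where "b = 2*g"
  have b1: "1 < b" unfolding b_def using g by simp
  have a0: "0 < a" unfolding a_def using m by simp
  have a1: "a \<le> 1" unfolding a_def using powr_mono[of "-1/(2*g)" 0 m] m g by simp
  have amb: "a powr (-b) = m" unfolding a_def b_def using m g by (simp add: powr_powr)
  have S: "{0..a} \<in> sets U"
  proof -
    have "{0..1} \<inter> {0..a} = {0..a}" using a1 by auto
    then show ?thesis using int_sets_U[of 0 a] by metis
  qed
  have i1: "integrable U (\<lambda>v. indicator {0..a} v :: real)"
    using S by (intro integrable_real_indicator) (auto simp: less_top[symmetric])
  have i2: "integrable U (\<lambda>v. indicator {a..1} v * v powr (-b))"
  proof (rule U.integrable_const_bound[where B="a powr (-b)"])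
    show "AE x in U. norm (indicator {a..1} x * x powr (-b)) \<le> a powr (-b)"
    proof (intro AE_I2)
      fix x assume "x \<in> space U"
      show "norm (indicator {a..1} x * x powr (-b)) \<le> a powr (-b)"
      proof (cases "x \<in> {a..1}")
        case True
        then have "x powr (-b) \<le> a powr (-b)" using a0 b1 by (intro powr_mono2') auto
        then show ?thesis using True by simp
      qed simp
    qed
    show "(\<lambda>v. indicator {a..1} v * v powr (-b)) \<in> borel_measurable U" by measurable
  qed
  have "integral\<^sup>L U (G g m) \<le> integral\<^sup>L U (\<lambda>v. indicator {0..a} v + 4/m * (indicator {a..1} v * v powr (-b)))"
  proof (rule integral_mono)
    show "integrable U (G g m)" using g m by (intro G_integrable) auto
    show "integrable U (\<lambda>v. indicator {0..a} v + 4/m * (indicator {a..1} v * v powr (-b)))"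
      using i1 i2 by (intro Bochner_Integration.integrable_add integrable_mult_right)
    fix v assume v: "v \<in> space U"
    show "G g m v \<le> indicator {0..a} v + 4/m * (indicator {a..1} v * v powr (-b))"
    proof (cases "v \<le> a")
      case True
      have nn: "0 \<le> 4/m * (indicator {a..1} v * v powr (-b))" using m by simp
      have "G g m v \<le> 1" using G_upper1[of g m v] g m v by (auto simp: space_U)
      moreover have "indicator {0..a} v = (1::real)" using True v by (auto simp: space_U)
      ultimately show ?thesis using nn by linarith
    next
      case False
      then show ?thesis using G_upper2[of g m v] g m v a0 unfolding b_def by (auto simp: space_U indicator_def)
    qed
  qed
  also have "\<dots> = a + 4/m * ((a powr (1-b) - 1) / (b - 1))"
    using i1 i2 a0 a1 b1
    by (simp add: J_eq meas_U_Icc space_U Int_absorb2)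
  also have "\<dots> \<le> a + 4/m * (a powr (1-b) / (b - 1))"
    using m b1 by (simp add: divide_right_mono)
  also have "a powr (1-b) = a * m"
  proof -
    have "a powr (1-b) = a powr (1 + (-b))" by simp
    also have "\<dots> = a powr 1 * a powr (-b)" by (rule powr_add)
    finally have "a powr (1-b) = a powr 1 * a powr (-b)" .
    then show ?thesis using amb a0 by simp
  qed
  also have "a + 4/m * (a * m / (b - 1)) = (1 + 4/(2*g-1)) * a"
    using m unfolding b_def by (simp add: field_simps)
  finally show ?thesis unfolding a_def .
qed

lemma powr_split:
  fixes A k p Q :: real
  assumes "0 \<le> A" "0 < k" "0 < p"
  shows "(A * k powr Q) powr (1/p) = A powr (1/p) * k powr (Q/p)"
  using assms by (simp add: powr_mult powr_powr)

lemma main_bounds: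
  fixes \<alpha> p :: real and k :: nat
  assumes a: "1 < \<alpha>" "\<alpha> < 2" and p: "2 \<le> p" and k: "1 \<le> k"
  defines "e \<equiv> -(\<alpha>-1)/2"
  defines "d1 \<equiv> (exp (-1/2) * (p/2) powr e) powr (1/p)"
  defines "d2 \<equiv> ((1 + 4/(2*(1/(\<alpha>-1))-1)) * (p/2) powr e) powr (1/p)"
  shows "d1 * real k powr (1/4 - (\<alpha>-1)/(2*p)) \<le> Lp_norm (mu (1/(\<alpha>-1))) p (H k)
       \<and> Lp_norm (mu (1/(\<alpha>-1))) p (H k) \<le> d2 * real k powr (1/4 - (\<alpha>-1)/(2*p))"
proof -
  define g where "g = 1/(\<alpha>-1)"
  have g1: "1 < g" unfolding g_def using a by (simp add: field_simps)
  define m where "m = real k * p / 2"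
  have m1: "1 \<le> m"
  proof -
    have "1 * 1 \<le> real k * (p/2)" using k p by (intro mult_mono) auto
    then show ?thesis unfolding m_def by simp
  qed
  define I where "I = integral\<^sup>L U (G g m)"
  have Leq: "integral\<^sup>L (mu g) (\<lambda>y. norm (H k y) powr p) = real k powr (p/4) * I"
    unfolding I_def m_def using g1 k p by (intro int_eq) auto
  have eg: "-1/(2*g) = e" unfolding g_def e_def using a by (simp add: field_simps)
  have me: "m powr e = real k powr e * (p/2) powr e"
  proof -
    have "m = real k * (p/2)" unfolding m_def by simp
    then show ?thesis using k p powr_mult[of "real k" "p/2" e] by (simp only:)
  qed
  define c1 where "c1 = exp (-1/2::real)"
  define c2 where "c2 = 1 + 4/(2*g-1)"
  have "0 < 4/(2*g-1)" using g1 by simp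
  then have c2pos: "0 < c2" unfolding c2_def by linarith
  have I1: "c1 * m powr e \<le> I" unfolding I_def c1_def using I_lower[of g m] g1 m1 eg by simp
  have I2: "I \<le> c2 * m powr e" unfolding I_def c2_def using I_upper[of g m] g1 m1 eg by simp
  have kpos: "0 < real k" using k by simp
  have kk: "real k powr (p/4) * real k powr e = real k powr (p/4 + e)" by (simp add: powr_add)
  have L1: "(c1 * (p/2) powr e) * real k powr (p/4 + e) \<le> real k powr (p/4) * I"
  proof -
    have "real k powr (p/4) * (c1 * m powr e) \<le> real k powr (p/4) * I" using I1 by (simp add: mult_left_mono)
    then show ?thesis unfolding me kk[symmetric] by (simp add: ac_simps)
  qed
  have L2: "real k powr (p/4) * I \<le> (c2 * (p/2) powr e) * real k powr (p/4 + e)"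
  proof -
    have "real k powr (p/4) * I \<le> real k powr (p/4) * (c2 * m powr e)" using I2 by (simp add: mult_left_mono)
    then show ?thesis unfolding me kk[symmetric] by (simp add: ac_simps)
  qed
  have Q: "(p/4 + e)/p = 1/4 - (\<alpha>-1)/(2*p)" unfolding e_def using p by (simp add: field_simps)
  have p0: "0 < p" using p by simp
  have nn1: "0 \<le> (c1 * (p/2) powr e) * real k powr (p/4 + e)" unfolding c1_def by simp
  have lo: "d1 * real k powr (1/4 - (\<alpha>-1)/(2*p)) \<le> (real k powr (p/4) * I) powr (1/p)"
  proof -
    have "((c1 * (p/2) powr e) * real k powr (p/4 + e)) powr (1/p) \<le> (real k powr (p/4) * I) powr (1/p)"
      using L1 nn1 p0 by (intro powr_mono2) auto
    moreover have "((c1 * (p/2) powr e) * real k powr (p/4 + e)) powr (1/p) = d1 * real k powr (1/4 - (\<alpha>-1)/(2*p))"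
      unfolding d1_def c1_def Q[symmetric] using kpos p0 by (intro powr_split) auto
    ultimately show ?thesis by simp
  qed
  have up: "(real k powr (p/4) * I) powr (1/p) \<le> d2 * real k powr (1/4 - (\<alpha>-1)/(2*p))"
  proof -
    have "(real k powr (p/4) * I) powr (1/p) \<le> ((c2 * (p/2) powr e) * real k powr (p/4 + e)) powr (1/p)"
      using L2 L1 nn1 p0 by (intro powr_mono2) auto
    moreover have "((c2 * (p/2) powr e) * real k powr (p/4 + e)) powr (1/p) = d2 * real k powr (1/4 - (\<alpha>-1)/(2*p))"
      unfolding d2_def c2_def g_def Q[symmetric] using kpos p0 c2pos[unfolded c2_def g_def] by (intro powr_split) auto
    ultimately show ?thesis by simp
  qed
  show ?thesis using lo up Leq unfolding Lp_norm_def g_def by simp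
qed

theorem proposition6p1:
  fixes \<alpha> :: real
  assumes "1 < \<alpha>" and "\<alpha> < 2"
  shows "\<exists>\<mu> (ks :: nat \<Rightarrow> nat). alpha_dimensional \<mu> \<alpha> \<and> strict_mono ks \<and>
    (\<forall>p::real. p \<ge> 2 \<longrightarrow> (\<exists>C>0. \<forall>n.
       inverse C * real (ks n) powr (1/4 - (\<alpha> - 1) / (2 * p)) \<le> Lp_norm \<mu> p (H (ks n)) \<and>
       Lp_norm \<mu> p (H (ks n)) \<le> C * real (ks n) powr (1/4 - (\<alpha> - 1) / (2 * p))))"
proof (rule exI[of _ "mu (1/(\<alpha>-1))"], rule exI[of _ Suc], intro conjI allI impI)
  have g: "0 < 1/(\<alpha>-1)" using assms by simp
  show "alpha_dimensional (mu (1/(\<alpha>-1))) \<alpha>"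
    unfolding alpha_dimensional_def
  proof (intro conjI)
    show "borel_prob_on_S2 (mu (1/(\<alpha>-1)))" using g by (rule mu_borel)
    show "\<exists>C>0. \<forall>x\<in>S2. \<forall>r. 0 < r \<and> r < pi \<longrightarrow> measure (mu (1/(\<alpha>-1))) (gball x r) \<le> C * r powr \<alpha>"
      using ball_bound[OF assms] by (intro exI[of _ "4 powr \<alpha>"]) auto
  qed
  show "strict_mono Suc" by (rule strict_monoI) simp
  fix p :: real assume p: "2 \<le> p"
  define e where "e = -(\<alpha>-1)/2"
  define d1 where "d1 = (exp (-1/2) * (p/2) powr e) powr (1/p)"
  define d2 where "d2 = ((1 + 4/(2*(1/(\<alpha>-1))-1)) * (p/2) powr e) powr (1/p)"
  have d1pos: "0 < d1" unfolding d1_def using p by simp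
  define C where "C = max (1/d1) d2 + 1"
  have "0 < 1/d1" using d1pos by simp
  then have C0: "0 < C" unfolding C_def by (smt (verit) max.cobounded1)
  have iC: "inverse C \<le> d1"
  proof -
    have "1/d1 \<le> C" unfolding C_def by simp
    then have "inverse C \<le> inverse (1/d1)" using d1pos by (intro le_imp_inverse_le) auto
    then show ?thesis by simp
  qed
  have d2C: "d2 \<le> C" unfolding C_def by simp
  show "\<exists>C>0. \<forall>n. inverse C * real (Suc n) powr (1/4 - (\<alpha> - 1) / (2 * p)) \<le> Lp_norm (mu (1/(\<alpha>-1))) p (H (Suc n)) \<and>
       Lp_norm (mu (1/(\<alpha>-1))) p (H (Suc n)) \<le> C * real (Suc n) powr (1/4 - (\<alpha> - 1) / (2 * p))"
  proof (intro exI[of _ C] conjI C0 allI)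
    fix n
    have mb: "d1 * real (Suc n) powr (1/4 - (\<alpha>-1)/(2*p)) \<le> Lp_norm (mu (1/(\<alpha>-1))) p (H (Suc n))
       \<and> Lp_norm (mu (1/(\<alpha>-1))) p (H (Suc n)) \<le> d2 * real (Suc n) powr (1/4 - (\<alpha>-1)/(2*p))"
      unfolding d1_def d2_def e_def using main_bounds[OF assms p, of "Suc n"] by simp
    have kp: "0 \<le> real (Suc n) powr (1/4 - (\<alpha>-1)/(2*p))" by simp
    show "inverse C * real (Suc n) powr (1/4 - (\<alpha> - 1) / (2 * p)) \<le> Lp_norm (mu (1/(\<alpha>-1))) p (H (Suc n))"
      using mb mult_right_mono[OF iC kp] by linarith
    show "Lp_norm (mu (1/(\<alpha>-1))) p (H (Suc n)) \<le> C * real (Suc n) powr (1/4 - (\<alpha> - 1) / (2 * p))"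
      using mb mult_right_mono[OF d2C kp] by linarith
  qed
qed

end
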